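(* Let $\mathcal H=\mathbb C^2$ with orthonormal basis $\{|0\rangle,|1\rangle\}$ and let $E_i=\tfrac12|\varphi_i\rangle\langle\varphi_i|$, $i=1,\dots,4$, where $|\varphi_1\rangle=|0\rangle$ and $|\varphi_{j}\rangle=\tfrac1{\sqrt3}|0\rangle+\sqrt{\tfrac23}e^{2\pi i (j-2)/3}|1\rangle$ for $j=2,3,4$ (the qubit SIC-POVM). Let $\mathcal T=\mathcal S(\mathbb C^2)$ be all qubit states and $\mathcal A$ the single POVM $\{E_i\}_{i=1}^4$. Then $(\mathcal T,\mathcal A,\mathcal A)$ is not broadcastable, but for every $n\in\mathbb N$ the map $\Xi_n(\rho)=\sum_{i=1}^4\mathrm{tr}[E_i\rho]\,(3|\varphi_i\rangle\langle\varphi_i|-I)^{\otimes n}$ is a trace-preserving linear map satisfying $\mathrm{tr}[(E_{i_1}\otimes\cdots\otimes E_{i_n})\Xi_n(\rho)]\ge0$ for all $i_1,\dots,i_n$ and all states $\rho$, and $\mathrm{tr}[E_{j}\,\mathrm{tr}_{k^c}\Xi_n(\rho)]=\mathrm{tr}[E_j\rho]$ for all $j$, all $k\in\{1,\dots,n\}$ and all states $\rho$; i.e. the scenario is $1\to n$-pseudo-broadcastable for all $n$.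
   Context: $(\mathcal T,\mathcal A,\mathcal A)$ is broadcastable if there is a completely positive trace-preserving map $\Lambda:\mathcal L(\mathcal H)\to\mathcal L(\mathcal H\otimes\mathcal H)$ such that $\mathrm{tr}[A_k\mathrm{tr}_2\Lambda(\rho)]=\mathrm{tr}[A_k\rho]=\mathrm{tr}[A_k\mathrm{tr}_1\Lambda(\rho)]$ for all $\{A_k\}\in\mathcal A$, $\rho\in\mathcal T$, $k$. $\mathrm{tr}_{k^c}$ denotes the partial trace over all tensor factors except the $k$-th. *)

theory Defs
  imports "Jordan_Normal_Form.Matrix" "Jordan_Normal_Form.Conjugate"
begin

(* Operators on C^d are complex d x d matrices (Jordan_Normal_Form).
   Tensor factors are ordered so that the first factor carries the most
   significant index digit (standard Kronecker convention). *)

definition mtrace :: "complex mat \<Rightarrow> complex" where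
  "mtrace A = (\<Sum>i<dim_row A. A $$ (i, i))"

(* positive semidefinite: <v, A v> >= 0 (real, non-negative; complex order) *)
definition psd :: "nat \<Rightarrow> complex mat \<Rightarrow> bool" where
  "psd d A \<longleftrightarrow> A \<in> carrier_mat d d \<and> (\<forall>v \<in> carrier_vec d. 0 \<le> (A *\<^sub>v v) \<bullet> conjugate v)"

definition states :: "nat \<Rightarrow> complex mat set" where
  "states d = {\<rho>. psd d \<rho> \<and> mtrace \<rho> = 1}"

definition kron :: "complex mat \<Rightarrow> complex mat \<Rightarrow> complex mat" where
  "kron A B = mat (dim_row A * dim_row B) (dim_col A * dim_col B)
     (\<lambda>(i, j). A $$ (i div dim_row B, j div dim_col B) * B $$ (i mod dim_row B, j mod dim_col B))"

definition kron_list :: "complex mat list \<Rightarrow> complex mat" where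
  "kron_list As = foldr kron As (1\<^sub>m 1)"

definition kron_pow :: "complex mat \<Rightarrow> nat \<Rightarrow> complex mat" where
  "kron_pow A n = kron_list (replicate n A)"

definition ketbra :: "complex vec \<Rightarrow> complex mat" where
  "ketbra v = mat (dim_vec v) (dim_vec v) (\<lambda>(a, b). v $ a * cnj (v $ b))"

definition lin_map :: "nat \<Rightarrow> nat \<Rightarrow> (complex mat \<Rightarrow> complex mat) \<Rightarrow> bool" where
  "lin_map d d' \<Lambda> \<longleftrightarrow>
     (\<forall>A \<in> carrier_mat d d. \<Lambda> A \<in> carrier_mat d' d') \<and>
     (\<forall>A \<in> carrier_mat d d. \<forall>B \<in> carrier_mat d d. \<Lambda> (A + B) = \<Lambda> A + \<Lambda> B) \<and>
     (\<forall>A \<in> carrier_mat d d. \<forall>c. \<Lambda> (c \<cdot>\<^sub>m A) = c \<cdot>\<^sub>m \<Lambda> A)"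

definition trace_preserving :: "nat \<Rightarrow> (complex mat \<Rightarrow> complex mat) \<Rightarrow> bool" where
  "trace_preserving d \<Lambda> \<longleftrightarrow> (\<forall>A \<in> carrier_mat d d. mtrace (\<Lambda> A) = mtrace A)"

(* id_m \<otimes> \<Lambda>, applied blockwise to an (m*d) x (m*d) matrix (ancilla C^m first) *)
definition id_tensor :: "nat \<Rightarrow> nat \<Rightarrow> nat \<Rightarrow> (complex mat \<Rightarrow> complex mat) \<Rightarrow> complex mat \<Rightarrow> complex mat" where
  "id_tensor m d d' \<Lambda> X = mat (m * d') (m * d')
     (\<lambda>(i, j). \<Lambda> (mat d d (\<lambda>(a, b). X $$ ((i div d') * d + a, (j div d') * d + b))) $$ (i mod d', j mod d'))"

definition completely_positive :: "nat \<Rightarrow> nat \<Rightarrow> (complex mat \<Rightarrow> complex mat) \<Rightarrow> bool" where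
  "completely_positive d d' \<Lambda> \<longleftrightarrow>
     (\<forall>m \<ge> 1. \<forall>X. psd (m * d) X \<longrightarrow> psd (m * d') (id_tensor m d d' \<Lambda> X))"

definition cptp :: "nat \<Rightarrow> nat \<Rightarrow> (complex mat \<Rightarrow> complex mat) \<Rightarrow> bool" where
  "cptp d d' \<Lambda> \<longleftrightarrow> lin_map d d' \<Lambda> \<and> completely_positive d d' \<Lambda> \<and> trace_preserving d \<Lambda>"

(* partial traces on C^d \<otimes> C^d: tr_2 keeps factor 1, tr_1 keeps factor 2 *)
definition ptrace2 :: "nat \<Rightarrow> complex mat \<Rightarrow> complex mat" where
  "ptrace2 d X = mat d d (\<lambda>(a, b). \<Sum>c<d. X $$ (a * d + c, b * d + c))"

definition ptrace1 :: "nat \<Rightarrow> complex mat \<Rightarrow> complex mat" where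
  "ptrace1 d X = mat d d (\<lambda>(a, b). \<Sum>c<d. X $$ (c * d + a, c * d + b))"

(* POVMs are finite lists of effects; (T, A, A) broadcastable on C^d *)
definition broadcastable :: "nat \<Rightarrow> complex mat set \<Rightarrow> complex mat list set \<Rightarrow> bool" where
  "broadcastable d T \<A> \<longleftrightarrow> (\<exists>\<Lambda>. cptp d (d * d) \<Lambda> \<and>
     (\<forall>As \<in> \<A>. \<forall>\<rho> \<in> T. \<forall>k < length As.
        mtrace (As ! k * ptrace2 d (\<Lambda> \<rho>)) = mtrace (As ! k * \<rho>) \<and>
        mtrace (As ! k * ptrace1 d (\<Lambda> \<rho>)) = mtrace (As ! k * \<rho>)))"

(* partial trace over all qubit factors except the k-th (1 <= k <= n) of an
   operator on (C^2)^{\<otimes> n}; result is a 2 x 2 matrix.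
   qins n k a r inserts the bit a at factor position k into the index r of
   the remaining n-1 factors. *)
definition qins :: "nat \<Rightarrow> nat \<Rightarrow> nat \<Rightarrow> nat \<Rightarrow> nat" where
  "qins n k a r = (r div 2 ^ (n - k)) * 2 ^ (n - k + 1) + a * 2 ^ (n - k) + r mod 2 ^ (n - k)"

definition ptrace_keep :: "nat \<Rightarrow> nat \<Rightarrow> complex mat \<Rightarrow> complex mat" where
  "ptrace_keep n k X = mat 2 2 (\<lambda>(a, b). \<Sum>r<2 ^ (n - 1). X $$ (qins n k a r, qins n k b r))"

definition sic_phi :: "nat \<Rightarrow> complex vec" where
  "sic_phi j = (if j = 1 then vec 2 (\<lambda>a. if a = 0 then 1 else 0)
     else vec 2 (\<lambda>a. if a = 0 then complex_of_real (1 / sqrt 3)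
       else complex_of_real (sqrt (2 / 3)) * cis (2 * pi * real (j - 2) / 3)))"

definition sic_E :: "nat \<Rightarrow> complex mat" where
  "sic_E i = (1 / 2 :: complex) \<cdot>\<^sub>m ketbra (sic_phi i)"

definition Xi :: "nat \<Rightarrow> complex mat \<Rightarrow> complex mat" where
  "Xi n \<rho> = mat (2 ^ n) (2 ^ n) (\<lambda>(r, c).
     \<Sum>i\<in>{1..4::nat}. mtrace (sic_E i * \<rho>) * kron_pow (3 \<cdot>\<^sub>m ketbra (sic_phi i) - 1\<^sub>m 2) n $$ (r, c))"

end

theory Submission
  imports Defs
begin


lemma sum_split_mult: "(\<Sum>r<(m::nat)*n. f r) = (\<Sum>a<m. \<Sum>b<n. f (a*n+b))"
proof (induction m)
  case 0 then show ?case by simp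
next
  case (Suc m)
  have "{..<Suc m * n} = {..<m*n} \<union> {m*n..<m*n+n}" by auto
  then have "(\<Sum>r<Suc m*n. f r) = (\<Sum>r<m*n. f r) + (\<Sum>r\<in>{m*n..<m*n+n}. f r)"
    by (simp add: sum.union_disjoint ivl_disj_int)
  also have "(\<Sum>r\<in>{m*n..<m*n+n}. f r) = (\<Sum>b<n. f (m*n+b))"
    using sum.shift_bounds_nat_ivl[of f 0 "m*n" n] by (simp add: atLeast0LessThan add.commute)
  finally show ?case using Suc by simp
qed

lemma idx_less: "a < (m::nat) \<Longrightarrow> c < n \<Longrightarrow> a*n+c < m*n"
proof -
  assume "a < m" "c < n"
  then have "a*n + c < Suc a * n" by simp
  also have "\<dots> \<le> m*n" using \<open>a<m\<close> by (intro mult_le_mono1) simp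
  finally show ?thesis .
qed

lemma dim_kron[simp]: "dim_row (kron A B) = dim_row A * dim_row B" "dim_col (kron A B) = dim_col A * dim_col B"
  by (auto simp: kron_def)

lemma kron_carrier: "kron A B \<in> carrier_mat (dim_row A * dim_row B) (dim_col A * dim_col B)"
  by (auto simp: kron_def)

lemma kron_index: "i < dim_row A * dim_row B \<Longrightarrow> j < dim_col A * dim_col B \<Longrightarrow>
  kron A B $$ (i,j) = A $$ (i div dim_row B, j div dim_col B) * B $$ (i mod dim_row B, j mod dim_col B)"
  by (auto simp: kron_def)

lemma kron_index2: "a < dim_row A \<Longrightarrow> c < dim_row B \<Longrightarrow> b < dim_col A \<Longrightarrow> d < dim_col B \<Longrightarrow>
  kron A B $$ (a * dim_row B + c, b * dim_col B + d) = A $$ (a,b) * B $$ (c,d)"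
proof -
  assume h: "a < dim_row A" "c < dim_row B" "b < dim_col A" "d < dim_col B"
  have i: "a * dim_row B + c < dim_row A * dim_row B"
    using idx_less h by blast
  have j: "b * dim_col B + d < dim_col A * dim_col B"
    using idx_less h by blast
  show ?thesis using kron_index[OF i j] h by simp
qed


lemma kron_mult:
  assumes A: "A \<in> carrier_mat n1 m1" and C: "C \<in> carrier_mat m1 k1"
    and B: "B \<in> carrier_mat n2 m2" and D: "D \<in> carrier_mat m2 k2"
  shows "kron A B * kron C D = kron (A*C) (B*D)"
proof (rule eq_matI)
  show "dim_row (kron A B * kron C D) = dim_row (kron (A*C) (B*D))" using A B C D by simp
  show "dim_col (kron A B * kron C D) = dim_col (kron (A*C) (B*D))" using A B C D by simp
  fix i j assume i: "i < dim_row (kron (A*C) (B*D))" and j: "j < dim_col (kron (A*C) (B*D))"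
  have i': "i < n1*n2" and j': "j < k1*k2" using i j A B C D by auto
  have n2: "n2 > 0" using i' by (cases n2) auto
  have k2: "k2 > 0" using j' by (cases k2) auto
  have i1: "i div n2 < n1" using i' n2 by (simp add: less_mult_imp_div_less)
  have j1: "j div k2 < k1" using j' k2 by (simp add: less_mult_imp_div_less)
  have "(kron A B * kron C D) $$ (i,j) = (\<Sum>r<m1*m2. kron A B $$ (i, r) * kron C D $$ (r, j))"
    using i' j' A B C D by (simp add: scalar_prod_def times_mat_def atLeast0LessThan kron_def)
  also have "\<dots> = (\<Sum>a<m1. \<Sum>b<m2. kron A B $$ (i, a*m2+b) * kron C D $$ (a*m2+b, j))"
    by (rule sum_split_mult)
  also have "\<dots> = (\<Sum>a<m1. \<Sum>b<m2. (A $$ (i div n2, a) * C $$ (a, j div k2)) * (B $$ (i mod n2, b) * D $$ (b, j mod k2)))"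
  proof (intro sum.cong refl)
    fix a b assume a: "a \<in> {..<m1}" and b: "b \<in> {..<m2}"
    have ab: "a*m2+b < m1*m2" using a b idx_less by auto
    show "kron A B $$ (i, a*m2+b) * kron C D $$ (a*m2+b, j) = (A $$ (i div n2, a) * C $$ (a, j div k2)) * (B $$ (i mod n2, b) * D $$ (b, j mod k2))"
      using kron_index[of i A B "a*m2+b"] kron_index[of "a*m2+b" C D j] ab i' j' A B C D b
      by (simp add: algebra_simps)
  qed
  also have "\<dots> = (\<Sum>a<m1. A $$ (i div n2, a) * C $$ (a, j div k2)) * (\<Sum>b<m2. B $$ (i mod n2, b) * D $$ (b, j mod k2))"
    by (simp add: sum_product)
  also have "\<dots> = (A*C) $$ (i div n2, j div k2) * (B*D) $$ (i mod n2, j mod k2)"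
    using A B C D i1 j1 n2 k2 by (simp add: scalar_prod_def times_mat_def atLeast0LessThan)
  also have "\<dots> = kron (A*C) (B*D) $$ (i,j)"
    using kron_index[of i "A*C" "B*D" j] i' j' A B C D by simp
  finally show "(kron A B * kron C D) $$ (i,j) = kron (A*C) (B*D) $$ (i,j)" .
qed

lemma mtrace_kron:
  assumes A: "A \<in> carrier_mat n1 n1" and B: "B \<in> carrier_mat n2 n2"
  shows "mtrace (kron A B) = mtrace A * mtrace B"
proof -
  have "mtrace (kron A B) = (\<Sum>i<n1*n2. kron A B $$ (i,i))" using A B by (simp add: mtrace_def)
  also have "\<dots> = (\<Sum>a<n1. \<Sum>b<n2. A $$ (a,a) * B $$ (b,b))"
    unfolding sum_split_mult
  proof (intro sum.cong refl)
    fix a b assume "a \<in> {..<n1}" "b \<in> {..<n2}"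
    then show "kron A B $$ (a*n2+b, a*n2+b) = A $$ (a,a) * B $$ (b,b)"
      using kron_index2[of a A b B a b] A B by simp
  qed
  also have "\<dots> = mtrace A * mtrace B" using A B by (simp add: mtrace_def sum_product)
  finally show ?thesis .
qed

lemma kron_assoc:
  assumes A: "A \<in> carrier_mat rA cA" and B: "B \<in> carrier_mat rB cB" and C: "C \<in> carrier_mat rC cC"
  shows "kron (kron A B) C = kron A (kron B C)"
proof (rule eq_matI)
  show "dim_row (kron (kron A B) C) = dim_row (kron A (kron B C))" by simp
  show "dim_col (kron (kron A B) C) = dim_col (kron A (kron B C))" by simp
  fix i j assume i: "i < dim_row (kron A (kron B C))" and j: "j < dim_col (kron A (kron B C))"
  have i': "i < rA*rB*rC" and j': "j < cA*cB*cC" using i j A B C by (auto simp: mult.assoc)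
  have rC: "rC > 0" using i' by (cases rC) auto
  have cC: "cC > 0" using j' by (cases cC) auto
  have e1: "i div rC < rA*rB" using i' rC by (simp add: less_mult_imp_div_less)
  have e2: "j div cC < cA*cB" using j' cC by (simp add: less_mult_imp_div_less)
  have m1: "i mod (rB*rC) div rC = i div rC mod rB"
    using mod_mult2_eq[of i rC rB] rC by (simp add: mult.commute)
  have m2: "j mod (cB*cC) div cC = j div cC mod cB"
    using mod_mult2_eq[of j cC cB] cC by (simp add: mult.commute)
  have m3: "i mod (rB*rC) mod rC = i mod rC" by (simp add: mod_mod_cancel)
  have m4: "j mod (cB*cC) mod cC = j mod cC" by (simp add: mod_mod_cancel)
  have i3: "i mod (rB*rC) < rB*rC" using rC i' by (metis mod_less_divisor mult_eq_0_iff neq0_conv mult_0_right less_nat_zero_code)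
  have j3: "j mod (cB*cC) < cB*cC" using cC j' by (metis mod_less_divisor mult_eq_0_iff neq0_conv mult_0_right less_nat_zero_code)
  have m5: "i div rB div rC = i div rC div rB" by (metis div_mult2_eq mult.commute)
  have m6: "j div cB div cC = j div cC div cB" by (metis div_mult2_eq mult.commute)
  show "kron (kron A B) C $$ (i,j) = kron A (kron B C) $$ (i,j)"
    using kron_index[of i "kron A B" C j] kron_index[of i A "kron B C" j] kron_index[of "i div rC" A B "j div cC"]
       kron_index[of "i mod (rB*rC)" B C "j mod (cB*cC)"] i' j' e1 e2 i3 j3 A B C
    by (simp add: m1 m2 m3 m4 m5 m6 div_mult2_eq mult.assoc mult.commute[of rC rB] mult.commute[of cC cB])
qed

lemma kron_one_left: "kron (1\<^sub>m 1) M = M"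
  by (rule eq_matI) (auto simp: kron_def)

lemma kron_list_Cons[simp]: "kron_list (A # As) = kron A (kron_list As)"
  by (simp add: kron_list_def)
lemma kron_list_Nil[simp]: "kron_list [] = 1\<^sub>m 1"
  by (simp add: kron_list_def)

lemma kron_list_carrier: "set As \<subseteq> carrier_mat 2 2 \<Longrightarrow> kron_list As \<in> carrier_mat (2^length As) (2^length As)"
proof (induction As)
  case Nil then show ?case by simp
next
  case (Cons A As)
  then show ?case using kron_carrier[of A "kron_list As"] by auto
qed

lemma kron_list_append: "set As \<subseteq> carrier_mat 2 2 \<Longrightarrow> set Bs \<subseteq> carrier_mat 2 2 \<Longrightarrow>
  kron_list (As @ Bs) = kron (kron_list As) (kron_list Bs)"
proof (induction As)
  case Nil then show ?case using kron_one_left[of "kron_list Bs"] by simp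
next
  case (Cons A As)
  then have "kron_list ((A#As) @ Bs) = kron A (kron (kron_list As) (kron_list Bs))" by simp
  also have "\<dots> = kron (kron A (kron_list As)) (kron_list Bs)"
    using Cons.prems kron_list_carrier[of As] kron_list_carrier[of Bs]
    by (intro kron_assoc[symmetric]) auto
  finally show ?case by simp
qed

lemma mtrace_kron_list:
  "length As = length Bs \<Longrightarrow> set As \<subseteq> carrier_mat 2 2 \<Longrightarrow> set Bs \<subseteq> carrier_mat 2 2 \<Longrightarrow>
   mtrace (kron_list As * kron_list Bs) = (\<Prod>k<length As. mtrace (As!k * Bs!k))"
proof (induction As arbitrary: Bs)
  case Nil then show ?case by (simp add: mtrace_def)
next
  case (Cons A As)
  then obtain B Bs' where Bs: "Bs = B # Bs'" by (cases Bs) auto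
  have cA: "kron_list As \<in> carrier_mat (2^length As) (2^length As)" using Cons.prems by (intro kron_list_carrier) auto
  have cB: "kron_list Bs' \<in> carrier_mat (2^length As) (2^length As)" using Cons.prems Bs kron_list_carrier[of Bs'] by auto
  have "mtrace (kron_list (A#As) * kron_list Bs) = mtrace (kron (A*B) (kron_list As * kron_list Bs'))"
    using Cons.prems Bs cA cB by (simp add: kron_mult[of A 2 2 B 2 "kron_list As" "2^length As" "2^length As" "kron_list Bs'" "2^length As"])
  also have "\<dots> = mtrace (A*B) * mtrace (kron_list As * kron_list Bs')"
    using Cons.prems Bs cA cB by (intro mtrace_kron[of _ 2 _ "2^length As"]) auto
  also have "\<dots> = (\<Prod>k<length (A#As). mtrace ((A#As)!k * Bs!k))"
    using Cons.IH[of Bs'] Cons.prems Bs by (simp add: prod.lessThan_Suc_shift del: prod.lessThan_Suc)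
  finally show ?case .
qed

lemma kron_pow_carrier: "B \<in> carrier_mat 2 2 \<Longrightarrow> kron_pow B n \<in> carrier_mat (2^n) (2^n)"
proof -
  assume "B \<in> carrier_mat 2 2"
  then have "set (replicate n B) \<subseteq> carrier_mat 2 2" by auto
  then show ?thesis using kron_list_carrier[of "replicate n B"] by (simp add: kron_pow_def)
qed

lemma mtrace_kron_pow: "B \<in> carrier_mat 2 2 \<Longrightarrow> mtrace (kron_pow B n) = mtrace B ^ n"
proof (induction n)
  case 0 then show ?case by (simp add: kron_pow_def mtrace_def)
next
  case (Suc n)
  have "kron_pow B (Suc n) = kron B (kron_pow B n)" by (simp add: kron_pow_def)
  then show ?case using Suc mtrace_kron[of B 2 "kron_pow B n" "2^n"] kron_pow_carrier[of B n] by simp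
qed


lemma ptrace_keep_kron_pow:
  assumes B: "B \<in> carrier_mat 2 2" and k: "1 \<le> k" "k \<le> n" and a: "a < 2" and b: "b < 2"
  shows "(\<Sum>r<2^(n-1). kron_pow B n $$ (qins n k a r, qins n k b r)) = B $$ (a,b) * mtrace B ^ (n-1)"
proof -
  define p where "p = k - 1"
  define m where "m = n - k"
  have n: "n = p + Suc m" and nk: "n - k = m" and n1: "n - 1 = p + m" using k by (auto simp: p_def m_def)
  define P where "P = kron_pow B p"
  define Q where "Q = kron_pow B m"
  have P: "P \<in> carrier_mat (2^p) (2^p)" unfolding P_def using B by (rule kron_pow_carrier)
  have Q: "Q \<in> carrier_mat (2^m) (2^m)" unfolding Q_def using B by (rule kron_pow_carrier)
  have BQ: "kron B Q \<in> carrier_mat (2*2^m) (2*2^m)" using kron_carrier[of B Q] B Q by simp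
  have "replicate n B = replicate p B @ (B # replicate m B)" by (simp add: n replicate_add replicate_append_same)
  then have K: "kron_pow B n = kron P (kron B Q)"
  proof -
    have "set (replicate p B) \<subseteq> carrier_mat 2 2" "set (B # replicate m B) \<subseteq> carrier_mat 2 2" using B by auto
    from kron_list_append[OF this] show ?thesis
      using \<open>replicate n B = _\<close> by (simp add: kron_pow_def P_def Q_def)
  qed
  have "(\<Sum>r<2^(n-1). kron_pow B n $$ (qins n k a r, qins n k b r))
      = (\<Sum>r1<2^p. \<Sum>r2<2^m. kron_pow B n $$ (qins n k a (r1*2^m+r2), qins n k b (r1*2^m+r2)))"
    unfolding n1 power_add by (rule sum_split_mult)
  also have "\<dots> = (\<Sum>r1<2^p. \<Sum>r2<2^m. P $$ (r1,r1) * (B $$ (a,b) * Q $$ (r2,r2)))"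
  proof (intro sum.cong refl)
    fix r1 r2 assume r1: "r1 \<in> {..<(2::nat)^p}" and r2: "r2 \<in> {..<(2::nat)^m}"
    have d: "(r1*2^m+r2) div 2^m = r1" and md: "(r1*2^m+r2) mod 2^m = r2" using r2 by auto
    have qa: "qins n k a (r1*2^m+r2) = r1 * (2*2^m) + (a * 2^m + r2)"
      unfolding qins_def nk d md by (simp add: algebra_simps)
    have qb: "qins n k b (r1*2^m+r2) = r1 * (2*2^m) + (b * 2^m + r2)"
      unfolding qins_def nk d md by (simp add: algebra_simps)
    have ia: "a * 2^m + r2 < 2*2^m" using idx_less[of a 2 r2 "2^m"] a r2 by simp
    have ib: "b * 2^m + r2 < 2*2^m" using idx_less[of b 2 r2 "2^m"] b r2 by simp
    have e1: "kron P (kron B Q) $$ (r1 * (2*2^m) + (a * 2^m + r2), r1 * (2*2^m) + (b * 2^m + r2))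
        = P $$ (r1,r1) * kron B Q $$ (a * 2^m + r2, b * 2^m + r2)"
      using kron_index2[of r1 P "a * 2^m + r2" "kron B Q" r1 "b * 2^m + r2"] P BQ r1 ia ib
      by (simp add: carrier_matD[OF B] carrier_matD[OF Q] carrier_matD[OF P])
    have e2: "kron B Q $$ (a * 2^m + r2, b * 2^m + r2) = B $$ (a,b) * Q $$ (r2,r2)"
      using kron_index2[of a B r2 Q b r2] B Q a b r2 by simp
    show "kron_pow B n $$ (qins n k a (r1*2^m+r2), qins n k b (r1*2^m+r2)) = P $$ (r1,r1) * (B $$ (a,b) * Q $$ (r2,r2))"
      using K qa qb e1 e2 by simp
  qed
  also have "\<dots> = mtrace P * B $$ (a,b) * mtrace Q"
    using P Q by (simp add: mtrace_def sum_product sum_distrib_left sum_distrib_right algebra_simps)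
  also have "\<dots> = B $$ (a,b) * mtrace B ^ (n-1)"
    using mtrace_kron_pow[OF B] n1 by (simp add: P_def Q_def power_add)
  finally show ?thesis .
qed


definition w3 :: complex where "w3 = Complex (-1/2) (sqrt 3/2)"
definition cs :: complex where "cs = complex_of_real (1/sqrt 3)"
definition ct :: complex where "ct = complex_of_real (sqrt (2/3))"

lemma w3_sq: "w3 * w3 = cnj w3"
  by (simp add: w3_def complex_eq_iff field_simps)
lemma w3_cnj: "w3 * cnj w3 = 1"
  by (simp add: w3_def complex_eq_iff field_simps)
lemma w3_sum: "1 + w3 + cnj w3 = 0"
  by (simp add: w3_def complex_eq_iff)
lemma w3_ne: "w3 \<noteq> cnj w3"
  by (simp add: w3_def complex_eq_iff)
lemma cs_sq: "cs * cs = 1/3"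
  by (simp add: cs_def flip: of_real_mult)
lemma ct_sq: "ct * ct = 2/3"
  by (simp add: ct_def flip: of_real_mult)
lemma cs_cnj[simp]: "cnj cs = cs" by (simp add: cs_def)
lemma ct_cnj[simp]: "cnj ct = ct" by (simp add: ct_def)
lemma cs_ne: "cs \<noteq> 0" by (simp add: cs_def)
lemma ct_ne: "ct \<noteq> 0" by (simp add: ct_def)

lemma cis_w3: "cis (2 * pi / 3) = w3"
  using cos_120 sin_120 by (simp add: w3_def cis.ctr)
lemma cis_w3b: "cis (2 * pi * 2 / 3) = cnj w3"
proof -
  have "cis (2 * pi * 2 / 3) = cis (2 * pi / 3) * cis (2 * pi / 3)" by (simp add: cis_mult)
  then show ?thesis using cis_w3 w3_sq by simp
qed

definition om :: "nat \<Rightarrow> complex" where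
  "om j = (if j = 2 then 1 else if j = 3 then w3 else cnj w3)"

lemma sic_phi_alt: "j \<in> {2,3,4} \<Longrightarrow> sic_phi j = vec 2 (\<lambda>a. if a = 0 then cs else ct * om j)"
  using cis_w3 cis_w3b by (auto simp: sic_phi_def om_def cs_def ct_def)

lemma sic_phi1: "sic_phi 1 = vec 2 (\<lambda>a. if a = 0 then 1 else 0)"
  by (simp add: sic_phi_def)


lemma sic_phi1_ent[simp]: "sic_phi (Suc 0) $ 0 = 1" "sic_phi (Suc 0) $ Suc 0 = 0"
  by (simp_all add: sic_phi_def)

lemma mtrace2: "M \<in> carrier_mat 2 2 \<Longrightarrow> N \<in> carrier_mat 2 2 \<Longrightarrow>
  mtrace (M*N) = M$$(0,0)*N$$(0,0) + M$$(0,1)*N$$(1,0) + M$$(1,0)*N$$(0,1) + M$$(1,1)*N$$(1,1)"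
  by (simp add: mtrace_def times_mat_def scalar_prod_def numeral_2_eq_2 lessThan_Suc atLeast0LessThan)

lemma om_unit: "j \<in> {2,3,4} \<Longrightarrow> om j * cnj (om j) = 1"
  using w3_cnj by (auto simp: om_def mult.commute)

lemma w3_sq2: "cnj w3 * cnj w3 = w3"
  using arg_cong[OF w3_sq, of cnj] by simp

lemma om_pair: "i \<in> {2,3,4} \<Longrightarrow> j \<in> {2,3,4} \<Longrightarrow> om i * cnj (om j) + om j * cnj (om i) = (if i = j then 2 else -1)"
proof -
  assume i: "i \<in> {2,3,4}" and j: "j \<in> {2,3,4}"
  have ws: "w3 + cnj w3 = -1" "cnj w3 + w3 = -1" using w3_sum by (simp_all add: eq_neg_iff_add_eq_0 add.commute add.left_commute)
  show ?thesis
  proof (cases "i = j")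
    case True then show ?thesis using om_unit[OF i] by simp
  next
    case False
    then consider "i = 2" "j = 3" | "i = 2" "j = 4" | "i = 3" "j = 2" | "i = 3" "j = 4" | "i = 4" "j = 2" | "i = 4" "j = 3"
      using i j by auto
    then show ?thesis
      by cases (simp_all add: om_def w3_sq w3_sq2 ws)
  qed
qed

definition Bm :: "nat \<Rightarrow> complex mat" where "Bm i = 3 \<cdot>\<^sub>m ketbra (sic_phi i) - 1\<^sub>m 2"

lemma dim_sic_phi[simp]: "dim_vec (sic_phi j) = 2" by (simp add: sic_phi_def)
lemma sic_E_carrier: "sic_E j \<in> carrier_mat 2 2" by (simp add: sic_E_def ketbra_def)
lemma Bm_carrier: "Bm j \<in> carrier_mat 2 2" by (rule carrier_matI) (simp_all add: Bm_def ketbra_def)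

lemma tr_EB_gen:
  assumes "dim_vec p = 2" "dim_vec q = 2"
  shows "mtrace ((1/2) \<cdot>\<^sub>m ketbra p * (3 \<cdot>\<^sub>m ketbra q - 1\<^sub>m 2)) =
    (1/2) * (3 * ((p$0 * cnj (q$0) + p$1 * cnj (q$1)) * (q$0 * cnj (p$0) + q$1 * cnj (p$1))) - (p$0 * cnj (p$0) + p$1 * cnj (p$1)))"
  using assms by (subst mtrace2) (auto simp: ketbra_def algebra_simps)

lemma tr_EB: "i \<in> {1..4} \<Longrightarrow> j \<in> {1..4} \<Longrightarrow> mtrace (sic_E j * Bm i) = (if i = j then 1 else 0)"
proof -
  assume i: "i \<in> {1..4}" and j: "j \<in> {1..4}"
  have e: "mtrace (sic_E j * Bm i) = (1/2) * (3 * ((sic_phi j$0 * cnj (sic_phi i$0) + sic_phi j$1 * cnj (sic_phi i$1)) * (sic_phi i$0 * cnj (sic_phi j$0) + sic_phi i$1 * cnj (sic_phi j$1))) - (sic_phi j$0 * cnj (sic_phi j$0) + sic_phi j$1 * cnj (sic_phi j$1)))"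
    unfolding sic_E_def Bm_def by (rule tr_EB_gen) auto
  show ?thesis
  proof (cases "i = 1")
    case True
    show ?thesis
    proof (cases "j = 1")
      case True with \<open>i = 1\<close> show ?thesis using e by (simp add: sic_phi_def)
    next
      case False
      then have j': "j \<in> {2,3,4}" using j by auto
      have u: "om j * cnj (om j) = 1" using om_unit[OF j'] .
      have "mtrace (sic_E j * Bm i) = (1/2) * (3 * (cs * cs) - (cs*cs + ct*ct*(om j * cnj (om j))))"
        using e \<open>i=1\<close> by (simp add: sic_phi_alt[OF j'] algebra_simps)
      also have "\<dots> = 0" unfolding u cs_sq ct_sq by simp
      finally show ?thesis using False \<open>i=1\<close> by simp
    qed
  next
    case False
    then have i': "i \<in> {2,3,4}" using i by auto
    show ?thesis
    proof (cases "j = 1")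
      case True
      have u: "om i * cnj (om i) = 1" using om_unit[OF i'] .
      have "mtrace (sic_E j * Bm i) = (1/2) * (3 * (cs * cs) - 1)"
        using e \<open>j=1\<close> by (simp add: sic_phi_alt[OF i'] algebra_simps)
      also have "\<dots> = 0" unfolding cs_sq by simp
      finally show ?thesis using False \<open>j=1\<close> by simp
    next
      case False
      then have j': "j \<in> {2,3,4}" using j by auto
      have u1: "om i * cnj (om i) = 1" "om j * cnj (om j) = 1" using om_unit i' j' by auto
      have p: "om i * cnj (om j) + om j * cnj (om i) = (if i = j then 2 else -1)" using om_pair i' j' by auto
      have "mtrace (sic_E j * Bm i) = (1/2) * (3 * ((cs * cs + ct * om j * (ct * cnj (om i))) * (cs * cs + ct * om i * (ct * cnj (om j)))) - (cs*cs + ct * om j * (ct * cnj (om j))))"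
        using e by (simp add: sic_phi_alt[OF i'] sic_phi_alt[OF j'])
      also have "\<dots> = (1/2) * (3 * (cs*cs*(cs*cs) + cs*cs*(ct*ct) * (om i * cnj (om j) + om j * cnj (om i)) + (ct*ct)*(ct*ct)*((om i * cnj (om i)) * (om j * cnj (om j)))) - (cs*cs + ct*ct * (om j * cnj (om j))))"
        by (simp add: algebra_simps)
      also have "\<dots> = (if i = j then 1 else 0)"
        unfolding u1 p cs_sq ct_sq by simp
      finally show ?thesis .
    qed
  qed
qed


lemma trE_gen:
  assumes "dim_vec p = 2" "M \<in> carrier_mat 2 2"
  shows "mtrace ((1/2) \<cdot>\<^sub>m ketbra p * M) =
    (1/2) * (p$0 * cnj (p$0) * M$$(0,0) + p$0 * cnj (p$1) * M$$(1,0) + p$1 * cnj (p$0) * M$$(0,1) + p$1 * cnj (p$1) * M$$(1,1))"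
  using assms by (subst mtrace2) (auto simp: ketbra_def algebra_simps)

lemma trE1: "M \<in> carrier_mat 2 2 \<Longrightarrow> mtrace (sic_E 1 * M) = M$$(0,0) / 2"
proof -
  assume M: "M \<in> carrier_mat 2 2"
  have "sic_E 1 = (1/2) \<cdot>\<^sub>m ketbra (sic_phi 1)" by (simp add: sic_E_def)
  then have "mtrace (sic_E 1 * M) = (1/2) * (sic_phi 1$0 * cnj (sic_phi 1$0) * M$$(0,0) + sic_phi 1$0 * cnj (sic_phi 1$1) * M$$(1,0) + sic_phi 1$1 * cnj (sic_phi 1$0) * M$$(0,1) + sic_phi 1$1 * cnj (sic_phi 1$1) * M$$(1,1))"
    using trE_gen[OF _ M, of "sic_phi 1"] by simp
  also have "\<dots> = M$$(0,0) / 2" by (simp add: sic_phi_def)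
  finally show ?thesis .
qed

lemma trEj: "j \<in> {2,3,4} \<Longrightarrow> M \<in> carrier_mat 2 2 \<Longrightarrow> mtrace (sic_E j * M) =
   (1/2) * (cs * cs * M$$(0,0) + cs * ct * (cnj (om j) * M$$(1,0) + om j * M$$(0,1)) + ct * ct * M$$(1,1))"
proof -
  assume j: "j \<in> {2,3,4}" and M: "M \<in> carrier_mat 2 2"
  have u: "om j * cnj (om j) = 1" using om_unit[OF j] .
  have "mtrace (sic_E j * M) = (1/2) * (cs * cs * M$$(0,0) + cs * ct * (cnj (om j) * M$$(1,0) + om j * M$$(0,1)) + ct * ct * (om j * cnj (om j)) * M$$(1,1))"
    unfolding sic_E_def using M by (subst trE_gen) (auto simp: sic_phi_alt[OF j] algebra_simps)
  then show ?thesis unfolding u by simp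
qed

lemma om_sum: "om 2 + om 3 + om 4 = 0" "cnj (om 2) + cnj (om 3) + cnj (om 4) = 0"
  using w3_sum by (simp_all add: om_def add.commute add.left_commute)

lemma sum_E: "M \<in> carrier_mat 2 2 \<Longrightarrow> (\<Sum>j\<in>{1..4::nat}. mtrace (sic_E j * M)) = mtrace M"
proof -
  assume M: "M \<in> carrier_mat 2 2"
  have s: "{1..4::nat} = insert 1 (insert 2 (insert 3 {4}))" by auto
  have "(\<Sum>j\<in>{1..4::nat}. mtrace (sic_E j * M)) = mtrace (sic_E 1 * M) + mtrace (sic_E 2 * M) + mtrace (sic_E 3 * M) + mtrace (sic_E 4 * M)"
    unfolding s by simp
  also have "\<dots> = M$$(0,0)/2 + (1/2) * (3 * (cs * cs) * M$$(0,0) + cs * ct * ((cnj (om 2) + cnj (om 3) + cnj (om 4)) * M$$(1,0) + (om 2 + om 3 + om 4) * M$$(0,1)) + 3 * (ct * ct) * M$$(1,1))"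
    using M trE1[OF M] trEj[of 2 M] trEj[of 3 M] trEj[of 4 M] by (simp add: algebra_simps)
  also have "\<dots> = M$$(0,0) + M$$(1,1)" unfolding om_sum cs_sq ct_sq by (simp add: field_simps)
  also have "\<dots> = mtrace M" using M by (simp add: mtrace_def numeral_2_eq_2)
  finally show ?thesis .
qed

lemma trB: "i \<in> {1..4} \<Longrightarrow> mtrace (Bm i) = 1"
proof -
  assume i4: "i \<in> {1..4}"
  have "mtrace (Bm i) = 3 * (sic_phi i $ 0 * cnj (sic_phi i $ 0) + sic_phi i $ 1 * cnj (sic_phi i $ 1)) - 2"
    by (simp add: Bm_def ketbra_def mtrace_def numeral_2_eq_2 algebra_simps)
  also have "\<dots> = 1"
  proof (cases "i = 1")
    case True then show ?thesis by simp
  next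
    case False
    show ?thesis
    proof (cases "i \<in> {2,3,4}")
      case True
      have u: "om i * cnj (om i) = 1" using om_unit[OF True] .
      have "3 * (sic_phi i $ 0 * cnj (sic_phi i $ 0) + sic_phi i $ 1 * cnj (sic_phi i $ 1)) - 2 = 3 * (cs*cs + ct*ct*(om i * cnj (om i))) - 2"
        by (simp add: sic_phi_alt[OF True] algebra_simps)
      then show ?thesis unfolding u cs_sq ct_sq by simp
    next
      case False then show ?thesis using i4 \<open>i \<noteq> 1\<close> by auto
    qed
  qed
  finally show ?thesis .
qed


lemma quad2: "dim_vec p = 2 \<Longrightarrow> R \<in> carrier_mat 2 2 \<Longrightarrow> (R *\<^sub>v p) \<bullet> conjugate p =
   R$$(0,0) * p$0 * cnj (p$0) + R$$(0,1) * p$1 * cnj (p$0) + R$$(1,0) * p$0 * cnj (p$1) + R$$(1,1) * p$1 * cnj (p$1)"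
  apply (simp add: scalar_prod_def mult_mat_vec_def numeral_2_eq_2 atLeast0LessThan lessThan_Suc)
  by (simp add: distrib_right)

lemma half_nonneg: "0 \<le> 2 * (x::complex) \<Longrightarrow> 0 \<le> x"
  unfolding less_eq_complex_def by simp

lemma psd_carrier: "psd d A \<Longrightarrow> A \<in> carrier_mat d d"
  unfolding psd_def by (rule conjunct1)

lemma states_psd: "\<rho> \<in> states d \<Longrightarrow> psd d \<rho>"
  unfolding states_def by simp

lemma psd_quad: "psd d A \<Longrightarrow> v \<in> carrier_vec d \<Longrightarrow> 0 \<le> (A *\<^sub>v v) \<bullet> conjugate v"
  unfolding psd_def by blast

lemma trE_nonneg: "\<rho> \<in> states 2 \<Longrightarrow> 0 \<le> mtrace (sic_E j * \<rho>)"
proof -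
  assume st: "\<rho> \<in> states 2"
  have p: "psd 2 \<rho>" using st by (rule states_psd)
  have R: "\<rho> \<in> carrier_mat 2 2" using p by (rule psd_carrier)
  have pc: "sic_phi j \<in> carrier_vec 2" by (rule carrier_vecI[OF dim_sic_phi])
  have q: "0 \<le> (\<rho> *\<^sub>v sic_phi j) \<bullet> conjugate (sic_phi j)" using psd_quad[OF p pc] .
  have m: "mtrace (sic_E j * \<rho>) = (1/2) * (sic_phi j$0 * cnj (sic_phi j$0) * \<rho>$$(0,0) + sic_phi j$0 * cnj (sic_phi j$1) * \<rho>$$(1,0) + sic_phi j$1 * cnj (sic_phi j$0) * \<rho>$$(0,1) + sic_phi j$1 * cnj (sic_phi j$1) * \<rho>$$(1,1))"
    unfolding sic_E_def by (rule trE_gen[OF _ R]) simp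
  have e: "(\<rho> *\<^sub>v sic_phi j) \<bullet> conjugate (sic_phi j) = 2 * mtrace (sic_E j * \<rho>)"
    unfolding m quad2[OF _ R, of "sic_phi j", OF dim_sic_phi] by (simp add: ac_simps)
  show ?thesis using q unfolding e by (rule half_nonneg)
qed


lemma ic_lemma:
  assumes Y: "Y \<in> carrier_mat 2 2" and R: "R \<in> carrier_mat 2 2"
    and eq: "\<And>j. j \<in> {1..4} \<Longrightarrow> mtrace (sic_E j * Y) = mtrace (sic_E j * R)"
  shows "Y = R"
proof -
  have d00: "Y$$(0,0) = R$$(0,0)" using eq[of 1] trE1[OF Y] trE1[OF R] by simp
  have ej: "cs * ct * (cnj (om j) * (Y$$(1,0) - R$$(1,0)) + om j * (Y$$(0,1) - R$$(0,1))) + ct * ct * (Y$$(1,1) - R$$(1,1)) = 0"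
    if j: "j \<in> {2,3,4}" for j
  proof -
    have "mtrace (sic_E j * Y) = mtrace (sic_E j * R)" using eq j by auto
    then have "(1/2) * (cs * cs * Y$$(0,0) + cs * ct * (cnj (om j) * Y$$(1,0) + om j * Y$$(0,1)) + ct * ct * Y$$(1,1))
      = (1/2) * (cs * cs * R$$(0,0) + cs * ct * (cnj (om j) * R$$(1,0) + om j * R$$(0,1)) + ct * ct * R$$(1,1))"
      using trEj[OF j Y] trEj[OF j R] by simp
    then have "cs * cs * Y$$(0,0) + cs * ct * (cnj (om j) * Y$$(1,0) + om j * Y$$(0,1)) + ct * ct * Y$$(1,1)
      = cs * cs * R$$(0,0) + cs * ct * (cnj (om j) * R$$(1,0) + om j * R$$(0,1)) + ct * ct * R$$(1,1)"
      by (subst (asm) mult_left_cancel) simp_all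
    then have h: "cs * ct * (cnj (om j) * Y$$(1,0) + om j * Y$$(0,1)) + ct * ct * Y$$(1,1)
      = cs * ct * (cnj (om j) * R$$(1,0) + om j * R$$(0,1)) + ct * ct * R$$(1,1)" using d00 by (simp add: add.assoc)
    have "cs * ct * (cnj (om j) * (Y$$(1,0) - R$$(1,0)) + om j * (Y$$(0,1) - R$$(0,1))) + ct * ct * (Y$$(1,1) - R$$(1,1))
      = (cs * ct * (cnj (om j) * Y$$(1,0) + om j * Y$$(0,1)) + ct * ct * Y$$(1,1))
      - (cs * ct * (cnj (om j) * R$$(1,0) + om j * R$$(0,1)) + ct * ct * R$$(1,1))"
      by (simp add: algebra_simps)
    also have "\<dots> = 0" using h by simp
    finally show ?thesis .
  qed
  define a where "a = Y$$(1,0) - R$$(1,0)"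
  define b where "b = Y$$(0,1) - R$$(0,1)"
  define c where "c = Y$$(1,1) - R$$(1,1)"
  have e2: "cs * ct * (cnj (om 2) * a + om 2 * b) + ct * ct * c = 0" using ej[of 2] by (simp add: a_def b_def c_def)
  have e3: "cs * ct * (cnj (om 3) * a + om 3 * b) + ct * ct * c = 0" using ej[of 3] by (simp add: a_def b_def c_def)
  have e4: "cs * ct * (cnj (om 4) * a + om 4 * b) + ct * ct * c = 0" using ej[of 4] by (simp add: a_def b_def c_def)
  have "cs * ct * ((cnj (om 2) + cnj (om 3) + cnj (om 4)) * a + (om 2 + om 3 + om 4) * b) + 3 * (ct * ct) * c = 0"
  proof -
    have "cs * ct * ((cnj (om 2) + cnj (om 3) + cnj (om 4)) * a + (om 2 + om 3 + om 4) * b) + 3 * (ct * ct) * c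
      = (cs * ct * (cnj (om 2) * a + om 2 * b) + ct * ct * c) + (cs * ct * (cnj (om 3) * a + om 3 * b) + ct * ct * c)
        + (cs * ct * (cnj (om 4) * a + om 4 * b) + ct * ct * c)" by (simp add: algebra_simps)
    then show ?thesis using e2 e3 e4 by simp
  qed
  then have "3 * (ct*ct) * c = 0" unfolding om_sum by simp
  then have c0: "c = 0" using ct_ne by simp
  have csct: "cs * ct \<noteq> 0" using cs_ne ct_ne by simp
  have "a + b = 0" using e2 c0 csct by (simp add: om_def)
  then have ab: "a = - b" by (simp add: eq_neg_iff_add_eq_0)
  have "cnj w3 * a + w3 * b = 0" using e3 c0 csct by (simp add: om_def)
  then have "(w3 - cnj w3) * b = 0" using ab by (simp add: algebra_simps)
  then have b0: "b = 0" using w3_ne by simp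
  have a0: "a = 0" using ab b0 by simp
  show ?thesis
  proof (rule eq_matI)
    fix i j assume "i < dim_row R" "j < dim_col R"
    then have "i < 2" "j < 2" using R by auto
    then have ij: "i = 0 \<or> i = 1" "j = 0 \<or> j = 1" by auto
    have y: "Y$$(1,0) = R$$(1,0)" "Y$$(0,1) = R$$(0,1)" "Y$$(1,1) = R$$(1,1)"
      using a0 b0 c0 unfolding a_def b_def c_def by simp_all
    show "Y $$ (i,j) = R $$ (i,j)"
      using ij d00 y by (elim disjE) simp_all
  next
    show "dim_row Y = dim_row R" using Y R by simp
  next
    show "dim_col Y = dim_col R" using Y R by simp
  qed
qed


lemma prod_nonneg_c: "(\<And>k. k < (n::nat) \<Longrightarrow> 0 \<le> f k) \<Longrightarrow> 0 \<le> (\<Prod>k<n. f k :: complex)"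
  by (induction n) (simp add: less_eq_complex_def, simp add: mult_nonneg_nonneg)

lemma mtrace_mult_sum: "A \<in> carrier_mat N N \<Longrightarrow> M \<in> carrier_mat N N \<Longrightarrow>
  mtrace (A * M) = (\<Sum>r<N. \<Sum>s<N. A $$ (r,s) * M $$ (s,r))"
  by (simp add: mtrace_def times_mat_def scalar_prod_def atLeast0LessThan)

lemma trace_lin_comb:
  assumes A: "A \<in> carrier_mat N N" and K: "\<And>i. i \<in> I \<Longrightarrow> K i \<in> carrier_mat N N"
  shows "mtrace (A * mat N N (\<lambda>(r,c). \<Sum>i\<in>I. g i * K i $$ (r,c))) = (\<Sum>i\<in>I. g i * mtrace (A * K i))"
proof -
  have "mtrace (A * mat N N (\<lambda>(r,c). \<Sum>i\<in>I. g i * K i $$ (r,c))) = (\<Sum>r<N. \<Sum>s<N. A $$ (r,s) * (\<Sum>i\<in>I. g i * K i $$ (s,r)))"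
    using A by (subst mtrace_mult_sum[of _ N]) auto
  also have "\<dots> = (\<Sum>i\<in>I. g i * (\<Sum>r<N. \<Sum>s<N. A $$ (r,s) * K i $$ (s,r)))"
    by (simp add: sum_distrib_left sum_distrib_right mult_ac sum.swap[of _ I])
  also have "\<dots> = (\<Sum>i\<in>I. g i * mtrace (A * K i))"
    using A K by (intro sum.cong refl) (simp add: mtrace_mult_sum[of _ N])
  finally show ?thesis .
qed

lemma Xi_alt: "Xi n \<rho> = mat (2^n) (2^n) (\<lambda>(r,c). \<Sum>i\<in>{1..4::nat}. mtrace (sic_E i * \<rho>) * kron_pow (Bm i) n $$ (r,c))"
  by (simp add: Xi_def Bm_def)

lemma Xi_carrier: "Xi n \<rho> \<in> carrier_mat (2^n) (2^n)"
  by (simp add: Xi_def)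

lemma mtrace_add: "E \<in> carrier_mat 2 2 \<Longrightarrow> A \<in> carrier_mat 2 2 \<Longrightarrow> B \<in> carrier_mat 2 2 \<Longrightarrow>
  mtrace (E * (A + B)) = mtrace (E * A) + mtrace (E * B)"
  by (simp add: mult_add_distrib_mat mtrace_def sum.distrib)

lemma mtrace_smult: "E \<in> carrier_mat 2 2 \<Longrightarrow> A \<in> carrier_mat 2 2 \<Longrightarrow>
  mtrace (E * (c \<cdot>\<^sub>m A)) = c * mtrace (E * A)"
  by (simp add: mult_smult_distrib[of E 2 2 A 2] mtrace_def sum_distrib_left)

lemma Xi_lin: "lin_map 2 (2^n) (Xi n)"
  unfolding lin_map_def
proof (intro conjI ballI allI)
  fix A :: "complex mat" assume "A \<in> carrier_mat 2 2"
  show "Xi n A \<in> carrier_mat (2^n) (2^n)" by (rule Xi_carrier)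
next
  fix A B :: "complex mat" assume A: "A \<in> carrier_mat 2 2" and B: "B \<in> carrier_mat 2 2"
  show "Xi n (A + B) = Xi n A + Xi n B"
    by (rule eq_matI) (simp_all add: Xi_def mtrace_add[OF sic_E_carrier A B] distrib_right sum.distrib)
next
  fix A :: "complex mat" and c :: complex assume A: "A \<in> carrier_mat 2 2"
  show "Xi n (c \<cdot>\<^sub>m A) = c \<cdot>\<^sub>m Xi n A"
    by (rule eq_matI) (simp_all add: Xi_def mtrace_smult[OF sic_E_carrier A] sum_distrib_left mult_ac)
qed

lemma dim_kpB[simp]: "dim_row (kron_pow (Bm i) n) = 2^n" "dim_col (kron_pow (Bm i) n) = 2^n"
  using kron_pow_carrier[OF Bm_carrier, of i n] by auto

lemma Xi_tp: "trace_preserving 2 (Xi n)"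
  unfolding trace_preserving_def
proof
  fix A :: "complex mat" assume A: "A \<in> carrier_mat 2 2"
  have "mtrace (Xi n A) = (\<Sum>r<2^n. \<Sum>i\<in>{1..4::nat}. mtrace (sic_E i * A) * kron_pow (Bm i) n $$ (r,r))"
    by (simp add: Xi_alt mtrace_def)
  also have "\<dots> = (\<Sum>i\<in>{1..4::nat}. mtrace (sic_E i * A) * mtrace (kron_pow (Bm i) n))"
    by (subst sum.swap) (simp add: sum_distrib_left mtrace_def dim_kpB)
  also have "\<dots> = (\<Sum>i\<in>{1..4::nat}. mtrace (sic_E i * A))"
    by (intro sum.cong refl) (simp add: mtrace_kron_pow[OF Bm_carrier] trB)
  also have "\<dots> = mtrace A" using sum_E[OF A] .
  finally show "mtrace (Xi n A) = mtrace A" .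
qed

lemma Xi_pos:
  assumes len: "length is = n" and set: "set is \<subseteq> {1..4}" and st: "\<rho> \<in> states 2"
  shows "0 \<le> mtrace (kron_list (map sic_E is) * Xi n \<rho>)"
proof -
  have Ecar: "set (map sic_E is) \<subseteq> carrier_mat 2 2" using sic_E_carrier by auto
  have KL: "kron_list (map sic_E is) \<in> carrier_mat (2^n) (2^n)"
    using kron_list_carrier[OF Ecar] len by simp
  have "mtrace (kron_list (map sic_E is) * Xi n \<rho>)
     = (\<Sum>i\<in>{1..4::nat}. mtrace (sic_E i * \<rho>) * mtrace (kron_list (map sic_E is) * kron_pow (Bm i) n))"
    unfolding Xi_alt by (rule trace_lin_comb[OF KL kron_pow_carrier[OF Bm_carrier]])
  also have "0 \<le> \<dots>"
  proof (rule sum_nonneg, rule mult_nonneg_nonneg)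
    fix i :: nat assume i: "i \<in> {1..4}"
    show "0 \<le> mtrace (sic_E i * \<rho>)" using st by (rule trE_nonneg)
    have Bcar: "set (replicate n (Bm i)) \<subseteq> carrier_mat 2 2" using Bm_carrier by auto
    have "mtrace (kron_list (map sic_E is) * kron_pow (Bm i) n) = (\<Prod>k<n. mtrace (sic_E (is!k) * Bm i))"
      unfolding kron_pow_def using mtrace_kron_list[OF _ Ecar Bcar] len by simp
    also have "0 \<le> \<dots>"
    proof (rule prod_nonneg_c)
      fix k assume "k < n"
      then have "is!k \<in> set is" using len by simp
      then have "is!k \<in> {1..4}" using set by blast
      then show "0 \<le> mtrace (sic_E (is!k) * Bm i)" using tr_EB[OF i] by (simp add: less_eq_complex_def)
    qed
    finally show "0 \<le> mtrace (kron_list (map sic_E is) * kron_pow (Bm i) n)" .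
  qed
  finally show ?thesis .
qed

lemma qins_less:
  assumes k: "1 \<le> k" "k \<le> n" and a: "a < 2" and r: "r < 2^(n-1)"
  shows "qins n k a r < 2^n"
proof -
  define m where "m = n - k"
  have n1: "2^(n-1) = (2::nat)^(k-1) * 2^m" and n2: "(2::nat)^n = 2^(k-1) * (2*2^m)"
    using k by (simp_all add: m_def flip: power_add power_Suc)
  have r1: "r div 2^m < 2^(k-1)" using r n1 by (simp add: less_mult_imp_div_less)
  have r2: "a * 2^m + r mod 2^m < 2 * 2^m" using idx_less[of a 2 "r mod 2^m" "2^m"] a by simp
  have "qins n k a r = (r div 2^m) * (2*2^m) + (a * 2^m + r mod 2^m)"
    by (simp add: qins_def m_def[symmetric] algebra_simps)
  also have "\<dots> < 2^(k-1) * (2*2^m)" by (rule idx_less[OF r1 r2])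
  finally show ?thesis using n2 by simp
qed

lemma Xi_marg:
  assumes j: "j \<in> {1..4}" and k: "1 \<le> k" "k \<le> n" and st: "\<rho> \<in> states 2"
  shows "mtrace (sic_E j * ptrace_keep n k (Xi n \<rho>)) = mtrace (sic_E j * \<rho>)"
proof -
  have R: "\<rho> \<in> carrier_mat 2 2" using st by (intro psd_carrier states_psd)
  have P: "ptrace_keep n k (Xi n \<rho>) = mat 2 2 (\<lambda>(a,b). \<Sum>i\<in>{1..4::nat}. mtrace (sic_E i * \<rho>) * Bm i $$ (a,b))"
  proof (rule eq_matI)
    fix a b assume a: "a < dim_row (mat 2 2 (\<lambda>(a,b). \<Sum>i\<in>{1..4::nat}. mtrace (sic_E i * \<rho>) * Bm i $$ (a,b)))"
      and b: "b < dim_col (mat 2 2 (\<lambda>(a,b). \<Sum>i\<in>{1..4::nat}. mtrace (sic_E i * \<rho>) * Bm i $$ (a,b)))"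
    have a2: "a < 2" and b2: "b < 2" using a b by auto
    have "ptrace_keep n k (Xi n \<rho>) $$ (a,b) = (\<Sum>r<2^(n-1). Xi n \<rho> $$ (qins n k a r, qins n k b r))"
      using a2 b2 by (simp add: ptrace_keep_def)
    also have "\<dots> = (\<Sum>r<2^(n-1). \<Sum>i\<in>{1..4::nat}. mtrace (sic_E i * \<rho>) * kron_pow (Bm i) n $$ (qins n k a r, qins n k b r))"
      using qins_less[OF k a2] qins_less[OF k b2] by (intro sum.cong refl) (simp add: Xi_alt)
    also have "\<dots> = (\<Sum>i\<in>{1..4::nat}. mtrace (sic_E i * \<rho>) * (\<Sum>r<2^(n-1). kron_pow (Bm i) n $$ (qins n k a r, qins n k b r)))"
      by (subst sum.swap) (simp add: sum_distrib_left)
    also have "\<dots> = (\<Sum>i\<in>{1..4::nat}. mtrace (sic_E i * \<rho>) * Bm i $$ (a,b))"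
    proof (intro sum.cong refl)
      fix i :: nat assume i: "i \<in> {1..4}"
      show "mtrace (sic_E i * \<rho>) * (\<Sum>r<2^(n-1). kron_pow (Bm i) n $$ (qins n k a r, qins n k b r)) = mtrace (sic_E i * \<rho>) * Bm i $$ (a,b)"
        using ptrace_keep_kron_pow[OF Bm_carrier k a2 b2, of i] trB[OF i] by simp
    qed
    finally show "ptrace_keep n k (Xi n \<rho>) $$ (a,b) = mat 2 2 (\<lambda>(a,b). \<Sum>i\<in>{1..4::nat}. mtrace (sic_E i * \<rho>) * Bm i $$ (a,b)) $$ (a,b)"
      using a2 b2 by simp
  qed (simp_all add: ptrace_keep_def)
  have "mtrace (sic_E j * ptrace_keep n k (Xi n \<rho>)) = (\<Sum>i\<in>{1..4::nat}. mtrace (sic_E i * \<rho>) * mtrace (sic_E j * Bm i))"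
    unfolding P by (rule trace_lin_comb[OF sic_E_carrier Bm_carrier])
  also have "\<dots> = (\<Sum>i\<in>{1..4::nat}. if i = j then mtrace (sic_E i * \<rho>) else 0)"
    using j by (intro sum.cong refl) (simp add: tr_EB)
  also have "\<dots> = mtrace (sic_E j * \<rho>)" using j by simp
  finally show ?thesis .
qed


lemma quad_expand:
  fixes X :: "complex mat"
  assumes X: "X \<in> carrier_mat n n" and w: "w \<in> carrier_vec n" and v: "v \<in> carrier_vec n"
  shows "(X *\<^sub>v (w + t \<cdot>\<^sub>v v)) \<bullet> conjugate (w + t \<cdot>\<^sub>v v) =
    (X *\<^sub>v w) \<bullet> conjugate w + cnj t * ((X *\<^sub>v w) \<bullet> conjugate v) + t * ((X *\<^sub>v v) \<bullet> conjugate w)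
    + t * cnj t * ((X *\<^sub>v v) \<bullet> conjugate v)"
proof -
  have tv: "t \<cdot>\<^sub>v v \<in> carrier_vec n" using v by simp
  have Xw: "X *\<^sub>v w \<in> carrier_vec n" and Xv: "X *\<^sub>v v \<in> carrier_vec n" using X w v by auto
  have cw: "conjugate w \<in> carrier_vec n" and cv: "conjugate v \<in> carrier_vec n" using w v by auto
  have 1: "X *\<^sub>v (w + t \<cdot>\<^sub>v v) = X *\<^sub>v w + t \<cdot>\<^sub>v (X *\<^sub>v v)"
    using mult_add_distrib_mat_vec[OF X w tv] mult_mat_vec[OF X v] by simp
  have 2: "conjugate (w + t \<cdot>\<^sub>v v) = conjugate w + cnj t \<cdot>\<^sub>v conjugate v"
    using conjugate_add_vec[OF w tv] conjugate_smult_vec[of t v] by simp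
  have ctv: "cnj t \<cdot>\<^sub>v conjugate v \<in> carrier_vec n" using cv by simp
  have tXv: "t \<cdot>\<^sub>v (X *\<^sub>v v) \<in> carrier_vec n" using Xv by simp
  have "(X *\<^sub>v w + t \<cdot>\<^sub>v (X *\<^sub>v v)) \<bullet> (conjugate w + cnj t \<cdot>\<^sub>v conjugate v)
     = (X *\<^sub>v w) \<bullet> (conjugate w + cnj t \<cdot>\<^sub>v conjugate v) + (t \<cdot>\<^sub>v (X *\<^sub>v v)) \<bullet> (conjugate w + cnj t \<cdot>\<^sub>v conjugate v)"
    by (rule add_scalar_prod_distrib[OF Xw tXv]) (use cw ctv in simp)
  also have "\<dots> = ((X *\<^sub>v w) \<bullet> conjugate w + (X *\<^sub>v w) \<bullet> (cnj t \<cdot>\<^sub>v conjugate v))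
      + ((t \<cdot>\<^sub>v (X *\<^sub>v v)) \<bullet> conjugate w + (t \<cdot>\<^sub>v (X *\<^sub>v v)) \<bullet> (cnj t \<cdot>\<^sub>v conjugate v))"
    using scalar_prod_add_distrib[OF Xw cw ctv] scalar_prod_add_distrib[OF tXv cw ctv] by simp
  also have "\<dots> = (X *\<^sub>v w) \<bullet> conjugate w + cnj t * ((X *\<^sub>v w) \<bullet> conjugate v) + t * ((X *\<^sub>v v) \<bullet> conjugate w)
    + t * cnj t * ((X *\<^sub>v v) \<bullet> conjugate v)"
    using Xw Xv cw cv by (simp add: scalar_prod_smult_distrib[of _ n] smult_scalar_prod_distrib[of _ n] mult.assoc)
  finally show ?thesis using 1 2 by simp
qed

lemma real_quad_zero:
  fixes P G :: real
  assumes h: "\<And>r. 0 \<le> r * P + r^2 * G" and G: "0 \<le> G"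
  shows "P = 0"
proof (rule ccontr)
  assume P: "P \<noteq> 0"
  define r where "r = - P / (G + 1)"
  have G1: "G + 1 > 0" using G by simp
  have G1': "G + 1 \<noteq> 0" using G1 by simp
  have a: "P + r * G = P / (G + 1)" using G1' by (simp add: r_def field_simps)
  have x: "P/(G+1) \<noteq> 0" using P G1' by simp
  have sq: "0 < (P/(G+1)) * (P/(G+1))" using zero_less_power2[of "P/(G+1)"] x unfolding power2_eq_square by blast
  have "r * P + r^2 * G = r * (P + r * G)" by (simp add: power2_eq_square algebra_simps)
  also have "\<dots> = - ((P / (G+1)) * (P / (G+1)))" unfolding a by (simp add: r_def)
  also have "\<dots> < 0" using sq by linarith
  finally show False using h[of r] by simp
qed

lemma complex_quad_zero:
  fixes p g :: complex
  assumes h: "\<And>r::real. 0 \<le> complex_of_real r * p + complex_of_real (r^2) * g" and g: "0 \<le> g"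
  shows "p = 0"
proof -
  have Ig: "Im g = 0" and Rg: "0 \<le> Re g" using g by (auto simp: less_eq_complex_def)
  have "Im (complex_of_real 1 * p + complex_of_real (1^2) * g) = 0" using h[of 1] by (simp add: less_eq_complex_def)
  then have Ip: "Im p = 0" using Ig by simp
  have "\<And>r. 0 \<le> r * Re p + r^2 * Re g" using h by (simp add: less_eq_complex_def)
  then have "Re p = 0" using real_quad_zero Rg by blast
  then show ?thesis using Ip by (simp add: complex_eq_iff)
qed

lemma psd_kernel:
  fixes X :: "complex mat"
  assumes ps: "psd n X" and w: "w \<in> carrier_vec n" and q0: "(X *\<^sub>v w) \<bullet> conjugate w = 0"
    and v: "v \<in> carrier_vec n"
  shows "(X *\<^sub>v w) \<bullet> conjugate v = 0 \<and> (X *\<^sub>v v) \<bullet> conjugate w = 0"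
proof -
  have X: "X \<in> carrier_mat n n" using ps by (rule psd_carrier)
  define \<alpha> where "\<alpha> = (X *\<^sub>v w) \<bullet> conjugate v"
  define \<beta> where "\<beta> = (X *\<^sub>v v) \<bullet> conjugate w"
  define \<gamma> where "\<gamma> = (X *\<^sub>v v) \<bullet> conjugate v"
  have g: "0 \<le> \<gamma>" unfolding \<gamma>_def using psd_quad[OF ps v] .
  have E: "0 \<le> cnj t * \<alpha> + t * \<beta> + t * cnj t * \<gamma>" for t
  proof -
    have "w + t \<cdot>\<^sub>v v \<in> carrier_vec n" using w v by simp
    from psd_quad[OF ps this] show ?thesis
      unfolding quad_expand[OF X w v] q0 \<alpha>_def \<beta>_def \<gamma>_def by simp
  qed
  have s1: "\<alpha> + \<beta> = 0"
  proof (rule complex_quad_zero[OF _ g])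
    fix r :: real
    show "0 \<le> complex_of_real r * (\<alpha> + \<beta>) + complex_of_real (r^2) * \<gamma>"
      using E[of "complex_of_real r"] by (simp add: algebra_simps power2_eq_square)
  qed
  have s2: "\<i> * (\<beta> - \<alpha>) = 0"
  proof (rule complex_quad_zero[OF _ g])
    fix r :: real
    have "cnj (\<i> * complex_of_real r) * \<alpha> + (\<i> * complex_of_real r) * \<beta> + (\<i> * complex_of_real r) * cnj (\<i> * complex_of_real r) * \<gamma>
      = complex_of_real r * (\<i> * (\<beta> - \<alpha>)) + complex_of_real (r^2) * \<gamma>"
      by (simp add: algebra_simps power2_eq_square)
    then show "0 \<le> complex_of_real r * (\<i> * (\<beta> - \<alpha>)) + complex_of_real (r^2) * \<gamma>"
      using E[of "\<i> * complex_of_real r"] by simp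
  qed
  from s2 have "\<beta> = \<alpha>" by simp
  with s1 have "\<alpha> = 0" "\<beta> = 0" by auto
  then show ?thesis unfolding \<alpha>_def \<beta>_def by simp
qed


lemma sum4: "(\<Sum>i<(4::nat). h i) = h 0 + h 1 + h 2 + (h 3 :: complex)"
  by (simp add: eval_nat_numeral)
lemma sum2: "(\<Sum>i<(2::nat). h i) = h 0 + (h 1 :: complex)"
  by (simp add: eval_nat_numeral)

lemma bil4:
  assumes X: "X \<in> carrier_mat 4 4"
  shows "(X *\<^sub>v vec 4 g) \<bullet> conjugate (vec 4 f) = (\<Sum>i<4. \<Sum>j<4. cnj (f i) * X$$(i,j) * g j)"
proof -
  have "(X *\<^sub>v vec 4 g) \<bullet> conjugate (vec 4 f) = (\<Sum>i<4. (\<Sum>j<4. X$$(i,j) * g j) * cnj (f i))"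
    using X by (simp add: scalar_prod_def atLeast0LessThan mult_mat_vec_def row_def)
  also have "\<dots> = (\<Sum>i<4. \<Sum>j<4. cnj (f i) * X$$(i,j) * g j)"
    by (simp add: sum_distrib_right sum_distrib_left mult_ac)
  finally show ?thesis .
qed

lemma delta_r: "(i::nat) < 4 \<Longrightarrow> (\<Sum>b<4. c b * (if b = i then 1 else 0)) = (c i :: complex)"
proof -
  assume i: "i < 4"
  have "(\<Sum>b<4. c b * (if b = i then 1 else 0)) = (\<Sum>b<(4::nat). if b = i then c b else 0)"
    by (intro sum.cong refl) simp
  also have "\<dots> = c i" using i by (simp add: sum.delta')
  finally show ?thesis .
qed

lemma delta_l: "(i::nat) < 4 \<Longrightarrow> (\<Sum>b<4. cnj (if b = i then 1 else 0) * c b) = (c i :: complex)"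
proof -
  assume i: "i < 4"
  have "(\<Sum>b<4. cnj (if b = i then 1 else 0) * c b) = (\<Sum>b<(4::nat). if b = i then c b else 0)"
    by (intro sum.cong refl) simp
  also have "\<dots> = c i" using i by (simp add: sum.delta')
  finally show ?thesis .
qed

lemma sel_row: "(k::nat) < 4 \<Longrightarrow> (\<Sum>i<4. \<Sum>j<4. cnj (if i = k then 1 else 0) * X$$(i,j) * w j) = (\<Sum>j<4. X$$(k,j) * w j)"
proof -
  assume k: "k < 4"
  have "(\<Sum>i<4. \<Sum>j<4. cnj (if i = k then 1 else 0) * X$$(i,j) * w j) = (\<Sum>i<(4::nat). if i = k then (\<Sum>j<4. X$$(k,j) * w j) else 0)"
    by (intro sum.cong refl) simp
  also have "\<dots> = (\<Sum>j<4. X$$(k,j) * w j)" using k by (simp add: sum.delta')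
  finally show ?thesis .
qed

lemma sel_col: "(k::nat) < 4 \<Longrightarrow> (\<Sum>i<4. \<Sum>j<4. cnj (w i) * X$$(i,j) * (if j = k then 1 else 0)) = (\<Sum>i<4. cnj (w i) * X$$(i,k))"
proof -
  assume k: "k < 4"
  have "(\<Sum>i<4. \<Sum>j<4. cnj (w i) * X$$(i,j) * (if j = k then 1 else 0)) = (\<Sum>i<(4::nat). \<Sum>j<(4::nat). if j = k then cnj (w i) * X$$(i,k) else 0)"
    by (intro sum.cong refl) simp
  also have "\<dots> = (\<Sum>i<4. cnj (w i) * X$$(i,k))" using k by (simp add: sum.delta')
  finally show ?thesis .
qed

lemma quad4_nonneg: "psd 4 X \<Longrightarrow> 0 \<le> (\<Sum>i<4. \<Sum>j<4. cnj (f i) * X$$(i,j) * f j)"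
  using psd_quad[of 4 X "vec 4 f"] bil4[OF psd_carrier] by simp

lemma kernel4:
  assumes ps: "psd 4 X" and q: "(\<Sum>i<4. \<Sum>j<4. cnj (w i) * X$$(i,j) * w j) = 0" and k: "k < 4"
  shows "(\<Sum>j<4. X$$(k,j) * w j) = 0" "(\<Sum>i<4. cnj (w i) * X$$(i,k)) = 0"
proof -
  have X: "X \<in> carrier_mat 4 4" using ps by (rule psd_carrier)
  define e where "e = (\<lambda>i::nat. if i = k then (1::complex) else 0)"
  have "(X *\<^sub>v vec 4 w) \<bullet> conjugate (vec 4 w) = 0" using q bil4[OF X] by simp
  from psd_kernel[OF ps _ this, of "vec 4 e"]
  have h: "(X *\<^sub>v vec 4 w) \<bullet> conjugate (vec 4 e) = 0" "(X *\<^sub>v vec 4 e) \<bullet> conjugate (vec 4 w) = 0" by auto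
  have "(\<Sum>i<4. \<Sum>j<4. cnj (e i) * X$$(i,j) * w j) = (\<Sum>j<4. X$$(k,j) * w j)"
    unfolding e_def using k by (rule sel_row)
  then show "(\<Sum>j<4. X$$(k,j) * w j) = 0" using h(1) bil4[OF X] by simp
  have "(\<Sum>i<4. \<Sum>j<4. cnj (w i) * X$$(i,j) * e j) = (\<Sum>i<4. cnj (w i) * X$$(i,k))"
    unfolding e_def using k by (rule sel_col)
  then show "(\<Sum>i<4. cnj (w i) * X$$(i,k)) = 0" using h(2) bil4[OF X] by simp
qed

lemma diag_nonneg: "psd 4 X \<Longrightarrow> i < 4 \<Longrightarrow> 0 \<le> X$$(i,i)"
proof -
  assume ps: "psd 4 X" and i: "i < 4"
  have "(\<Sum>a<4. \<Sum>b<4. cnj (if a = i then 1 else 0) * X$$(a,b) * (if b = i then 1 else 0)) = X$$(i,i)"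
    using sel_row[OF i, of X "\<lambda>b. if b = i then 1 else 0"] delta_r[OF i, of "\<lambda>b. X$$(i,b)"] by simp
  then show ?thesis using quad4_nonneg[OF ps, of "\<lambda>a. if a = i then 1 else 0"] by simp
qed

lemma zero_rowcol: "psd 4 X \<Longrightarrow> i < 4 \<Longrightarrow> X$$(i,i) = 0 \<Longrightarrow> k < 4 \<Longrightarrow> X$$(k,i) = 0 \<and> X$$(i,k) = 0"
proof -
  assume ps: "psd 4 X" and i: "i < 4" and z: "X$$(i,i) = 0" and k: "k < 4"
  define e where "e = (\<lambda>a::nat. if a = i then (1::complex) else 0)"
  have "(\<Sum>a<4. \<Sum>b<4. cnj (e a) * X$$(a,b) * e b) = X$$(i,i)"
    using sel_row[OF i, of X e] delta_r[OF i, of "\<lambda>b. X$$(i,b)"] by (simp add: e_def)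
  then have q: "(\<Sum>a<4. \<Sum>b<4. cnj (e a) * X$$(a,b) * e b) = 0" using z by simp
  have "(\<Sum>j<4. X$$(k,j) * e j) = X$$(k,i)" unfolding e_def by (rule delta_r[OF i])
  moreover have "(\<Sum>a<4. cnj (e a) * X$$(a,k)) = X$$(i,k)" unfolding e_def by (rule delta_l[OF i])
  ultimately show ?thesis using kernel4[OF ps q k] by simp
qed


definition P0 :: "complex mat" where "P0 = mat 2 2 (\<lambda>(a,b). if a = 0 \<and> b = 0 then 1 else 0)"
definition P1 :: "complex mat" where "P1 = mat 2 2 (\<lambda>(a,b). if a = 1 \<and> b = 1 then 1 else 0)"
definition Pp :: "complex mat" where "Pp = mat 2 2 (\<lambda>_. 1/2)"
definition Pm :: "complex mat" where "Pm = mat 2 2 (\<lambda>(a,b). if a = b then 1/2 else -1/2)"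

definition sg :: "nat \<Rightarrow> complex" where "sg i = (if i < 2 then 1 else -1)"
definition Lf :: "complex mat \<Rightarrow> complex" where "Lf X = (\<Sum>i<4. \<Sum>j<4. sg i * sg j * X$$(i,j))"

lemma Lf_expand: "Lf X = X$$(0,0) + X$$(0,1) - X$$(0,2) - X$$(0,3) + X$$(1,0) + X$$(1,1) - X$$(1,2) - X$$(1,3)
   - X$$(2,0) - X$$(2,1) + X$$(2,2) + X$$(2,3) - X$$(3,0) - X$$(3,1) + X$$(3,2) + X$$(3,3)"
  by (simp add: Lf_def sum4 sg_def)

lemma pt2: "a < 2 \<Longrightarrow> b < 2 \<Longrightarrow> ptrace2 2 X $$ (a,b) = X$$(a*2, b*2) + X$$(a*2+1, b*2+1)"
  by (simp add: ptrace2_def sum2)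
lemma pt1: "a < 2 \<Longrightarrow> b < 2 \<Longrightarrow> ptrace1 2 X $$ (a,b) = X$$(a,b) + X$$(2+a, 2+b)"
  by (simp add: ptrace1_def sum2)

lemma nonneg_sum0: "0 \<le> (x::complex) \<Longrightarrow> 0 \<le> y \<Longrightarrow> x + y = 0 \<Longrightarrow> x = 0 \<and> y = 0"
  by (simp add: add_nonneg_eq_0_iff)

lemma L_P0:
  assumes ps: "psd 4 X" and t2: "ptrace2 2 X = P0" and t1: "ptrace1 2 X = P0"
  shows "Lf X = 1"
proof -
  have h1: "X$$(2,2) + X$$(3,3) = 0" using pt2[of 1 1 X] t2 by (simp add: P0_def)
  have h2: "X$$(1,1) + X$$(3,3) = 0" using pt1[of 1 1 X] t1 by (simp add: P0_def)
  have h3: "X$$(0,0) + X$$(1,1) = 1" using pt2[of 0 0 X] t2 by (simp add: P0_def)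
  have z: "X$$(1,1) = 0" "X$$(2,2) = 0" "X$$(3,3) = 0"
    using nonneg_sum0[OF diag_nonneg[OF ps, of 2] diag_nonneg[OF ps, of 3] h1]
      nonneg_sum0[OF diag_nonneg[OF ps, of 1] diag_nonneg[OF ps, of 3] h2] by auto
  have x00: "X$$(0,0) = 1" using h3 z by simp
  have r1: "\<And>k. k < 4 \<Longrightarrow> X$$(k,1) = 0 \<and> X$$(1,k) = 0" using zero_rowcol[OF ps _ z(1)] by simp
  have r2: "\<And>k. k < 4 \<Longrightarrow> X$$(k,2) = 0 \<and> X$$(2,k) = 0" using zero_rowcol[OF ps _ z(2)] by simp
  have r3: "\<And>k. k < 4 \<Longrightarrow> X$$(k,3) = 0 \<and> X$$(3,k) = 0" using zero_rowcol[OF ps _ z(3)] by simp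
  show ?thesis unfolding Lf_expand using x00 r1[of 0] r1[of 2] r1[of 3] r2[of 0] r2[of 1] r2[of 3]
    r3[of 0] r3[of 1] r3[of 2] r1[of 1] r2[of 2] r3[of 3] by simp
qed

lemma L_P1:
  assumes ps: "psd 4 X" and t2: "ptrace2 2 X = P1" and t1: "ptrace1 2 X = P1"
  shows "Lf X = 1"
proof -
  have h1: "X$$(0,0) + X$$(1,1) = 0" using pt2[of 0 0 X] t2 by (simp add: P1_def)
  have h2: "X$$(0,0) + X$$(2,2) = 0" using pt1[of 0 0 X] t1 by (simp add: P1_def)
  have h3: "X$$(2,2) + X$$(3,3) = 1" using pt2[of 1 1 X] t2 by (simp add: P1_def)
  have z: "X$$(0,0) = 0" "X$$(1,1) = 0" "X$$(2,2) = 0"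
    using nonneg_sum0[OF diag_nonneg[OF ps, of 0] diag_nonneg[OF ps, of 1] h1]
      nonneg_sum0[OF diag_nonneg[OF ps, of 0] diag_nonneg[OF ps, of 2] h2] by auto
  have x33: "X$$(3,3) = 1" using h3 z by simp
  have r1: "\<And>k. k < 4 \<Longrightarrow> X$$(k,0) = 0 \<and> X$$(0,k) = 0" using zero_rowcol[OF ps _ z(1)] by simp
  have r2: "\<And>k. k < 4 \<Longrightarrow> X$$(k,1) = 0 \<and> X$$(1,k) = 0" using zero_rowcol[OF ps _ z(2)] by simp
  have r3: "\<And>k. k < 4 \<Longrightarrow> X$$(k,2) = 0 \<and> X$$(2,k) = 0" using zero_rowcol[OF ps _ z(3)] by simp
  show ?thesis unfolding Lf_expand using x33 r1[of 0] r1[of 1] r1[of 2] r1[of 3] r2[of 0] r2[of 1] r2[of 2] r2[of 3]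
    r3[of 0] r3[of 1] r3[of 2] r3[of 3] by simp
qed

lemma L_Pp:
  assumes ps: "psd 4 X" and t2: "ptrace2 2 X = Pp"
  shows "Lf X = 0"
proof -
  define w1 where "w1 = (\<lambda>i::nat. if i = 0 then 1 else if i = 2 then -1 else (0::complex))"
  define w2 where "w2 = (\<lambda>i::nat. if i = 1 then 1 else if i = 3 then -1 else (0::complex))"
  have q1: "(\<Sum>i<4. \<Sum>j<4. cnj (w1 i) * X$$(i,j) * w1 j) = X$$(0,0) - X$$(0,2) - X$$(2,0) + X$$(2,2)"
    by (simp add: sum4 w1_def)
  have q2: "(\<Sum>i<4. \<Sum>j<4. cnj (w2 i) * X$$(i,j) * w2 j) = X$$(1,1) - X$$(1,3) - X$$(3,1) + X$$(3,3)"
    by (simp add: sum4 w2_def)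
  have "(X$$(0,0) - X$$(0,2) - X$$(2,0) + X$$(2,2)) + (X$$(1,1) - X$$(1,3) - X$$(3,1) + X$$(3,3))
     = ptrace2 2 X $$ (0,0) - ptrace2 2 X $$ (0,1) - ptrace2 2 X $$ (1,0) + ptrace2 2 X $$ (1,1)"
    by (simp add: pt2)
  also have "\<dots> = 0" using t2 by (simp add: Pp_def)
  finally have s: "(\<Sum>i<4. \<Sum>j<4. cnj (w1 i) * X$$(i,j) * w1 j) + (\<Sum>i<4. \<Sum>j<4. cnj (w2 i) * X$$(i,j) * w2 j) = 0"
    unfolding q1 q2 .
  from nonneg_sum0[OF quad4_nonneg[OF ps] quad4_nonneg[OF ps] s]
  have z1: "(\<Sum>i<4. \<Sum>j<4. cnj (w1 i) * X$$(i,j) * w1 j) = 0" and z2: "(\<Sum>i<4. \<Sum>j<4. cnj (w2 i) * X$$(i,j) * w2 j) = 0" by auto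
  have c1: "\<And>k. k < 4 \<Longrightarrow> X$$(k,0) - X$$(k,2) = 0"
    using kernel4(1)[OF ps z1] by (simp add: sum4 w1_def)
  have c2: "\<And>k. k < 4 \<Longrightarrow> X$$(k,1) - X$$(k,3) = 0"
    using kernel4(1)[OF ps z2] by (simp add: sum4 w2_def)
  have "Lf X = (X$$(0,0) - X$$(0,2)) + (X$$(0,1) - X$$(0,3)) + (X$$(1,0) - X$$(1,2)) + (X$$(1,1) - X$$(1,3))
     - (X$$(2,0) - X$$(2,2)) - (X$$(2,1) - X$$(2,3)) - (X$$(3,0) - X$$(3,2)) - (X$$(3,1) - X$$(3,3))"
    unfolding Lf_expand by (simp add: algebra_simps)
  also have "\<dots> = 0" using c1[of 0] c1[of 1] c1[of 2] c1[of 3] c2[of 0] c2[of 1] c2[of 2] c2[of 3] by simp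
  finally show ?thesis .
qed

lemma L_Pm:
  assumes ps: "psd 4 X" and t1: "ptrace1 2 X = Pm"
  shows "Lf X = 0"
proof -
  define w1 where "w1 = (\<lambda>i::nat. if i = 0 then 1 else if i = 1 then 1 else (0::complex))"
  define w2 where "w2 = (\<lambda>i::nat. if i = 2 then 1 else if i = 3 then 1 else (0::complex))"
  have q1: "(\<Sum>i<4. \<Sum>j<4. cnj (w1 i) * X$$(i,j) * w1 j) = X$$(0,0) + X$$(0,1) + X$$(1,0) + X$$(1,1)"
    by (simp add: sum4 w1_def)
  have q2: "(\<Sum>i<4. \<Sum>j<4. cnj (w2 i) * X$$(i,j) * w2 j) = X$$(2,2) + X$$(2,3) + X$$(3,2) + X$$(3,3)"
    by (simp add: sum4 w2_def)
  have "(X$$(0,0) + X$$(0,1) + X$$(1,0) + X$$(1,1)) + (X$$(2,2) + X$$(2,3) + X$$(3,2) + X$$(3,3))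
     = ptrace1 2 X $$ (0,0) + ptrace1 2 X $$ (0,1) + ptrace1 2 X $$ (1,0) + ptrace1 2 X $$ (1,1)"
    by (simp add: pt1)
  also have "\<dots> = 0" using t1 by (simp add: Pm_def)
  finally have s: "(\<Sum>i<4. \<Sum>j<4. cnj (w1 i) * X$$(i,j) * w1 j) + (\<Sum>i<4. \<Sum>j<4. cnj (w2 i) * X$$(i,j) * w2 j) = 0"
    unfolding q1 q2 .
  from nonneg_sum0[OF quad4_nonneg[OF ps] quad4_nonneg[OF ps] s]
  have z1: "(\<Sum>i<4. \<Sum>j<4. cnj (w1 i) * X$$(i,j) * w1 j) = 0" and z2: "(\<Sum>i<4. \<Sum>j<4. cnj (w2 i) * X$$(i,j) * w2 j) = 0" by auto
  have c1: "\<And>k. k < 4 \<Longrightarrow> X$$(k,0) + X$$(k,1) = 0"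
    using kernel4(1)[OF ps z1] by (simp add: sum4 w1_def)
  have c2: "\<And>k. k < 4 \<Longrightarrow> X$$(k,2) + X$$(k,3) = 0"
    using kernel4(1)[OF ps z2] by (simp add: sum4 w2_def)
  have "Lf X = (X$$(0,0) + X$$(0,1)) - (X$$(0,2) + X$$(0,3)) + (X$$(1,0) + X$$(1,1)) - (X$$(1,2) + X$$(1,3))
     - (X$$(2,0) + X$$(2,1)) + (X$$(2,2) + X$$(2,3)) - (X$$(3,0) + X$$(3,1)) + (X$$(3,2) + X$$(3,3))"
    unfolding Lf_expand by (simp add: algebra_simps)
  also have "\<dots> = 0" using c1[of 0] c1[of 1] c1[of 2] c1[of 3] c2[of 0] c2[of 1] c2[of 2] c2[of 3] by simp
  finally show ?thesis .
qed

lemma Lf_add: "A \<in> carrier_mat 4 4 \<Longrightarrow> B \<in> carrier_mat 4 4 \<Longrightarrow> Lf (A + B) = Lf A + Lf B"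
  by (simp add: Lf_def sum4 algebra_simps)

lemma no_clone:
  assumes p0: "psd 4 X0" and p1: "psd 4 X1" and pp: "psd 4 Xp" and pm: "psd 4 Xm"
    and a0: "ptrace2 2 X0 = P0" "ptrace1 2 X0 = P0"
    and a1: "ptrace2 2 X1 = P1" "ptrace1 2 X1 = P1"
    and ap: "ptrace2 2 Xp = Pp" and am: "ptrace1 2 Xm = Pm"
    and eq: "X0 + X1 = Xp + Xm"
  shows False
proof -
  have "Lf (X0 + X1) = 2" using Lf_add[OF psd_carrier[OF p0] psd_carrier[OF p1]] L_P0[OF p0 a0] L_P1[OF p1 a1] by simp
  moreover have "Lf (Xp + Xm) = 0" using Lf_add[OF psd_carrier[OF pp] psd_carrier[OF pm]] L_Pp[OF pp ap] L_Pm[OF pm am] by simp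
  ultimately show False using eq by simp
qed


lemma psd2I:
  assumes R: "R \<in> carrier_mat 2 2"
    and h: "\<And>p0 p1. 0 \<le> R$$(0,0) * p0 * cnj p0 + R$$(0,1) * p1 * cnj p0 + R$$(1,0) * p0 * cnj p1 + R$$(1,1) * p1 * cnj p1"
  shows "psd 2 R"
  unfolding psd_def
proof (intro conjI ballI R)
  fix v :: "complex vec" assume v: "v \<in> carrier_vec 2"
  show "0 \<le> (R *\<^sub>v v) \<bullet> conjugate v" using quad2[OF _ R, of v] v h[of "v$0" "v$1"] by simp
qed

lemma sq_nonneg_c: "0 \<le> (x::complex) * cnj x"
  using conjugate_square_positive[of x] by simp

lemma half_sq: "0 \<le> (1/2::complex) * (x * cnj x)"
  by (rule mult_nonneg_nonneg) (simp_all add: less_eq_complex_def sq_nonneg_c)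

lemma P0_state: "P0 \<in> states 2"
  unfolding states_def
proof (intro CollectI conjI)
  show "psd 2 P0" by (rule psd2I) (simp_all add: P0_def sq_nonneg_c)
  show "mtrace P0 = 1" by (simp add: P0_def mtrace_def sum2)
qed

lemma P1_state: "P1 \<in> states 2"
  unfolding states_def
proof (intro CollectI conjI)
  show "psd 2 P1" by (rule psd2I) (simp_all add: P1_def sq_nonneg_c)
  show "mtrace P1 = 1" by (simp add: P1_def mtrace_def sum2)
qed

lemma Pp_state: "Pp \<in> states 2"
  unfolding states_def
proof (intro CollectI conjI)
  show "psd 2 Pp"
  proof (rule psd2I)
    show "Pp \<in> carrier_mat 2 2" by (simp add: Pp_def)
    fix p0 p1 :: complex
    have "Pp$$(0,0) * p0 * cnj p0 + Pp$$(0,1) * p1 * cnj p0 + Pp$$(1,0) * p0 * cnj p1 + Pp$$(1,1) * p1 * cnj p1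
      = (1/2) * ((p0 + p1) * cnj (p0 + p1))" (is "_ = ?r") by (simp add: Pp_def algebra_simps)
    then show "0 \<le> Pp$$(0,0) * p0 * cnj p0 + Pp$$(0,1) * p1 * cnj p0 + Pp$$(1,0) * p0 * cnj p1 + Pp$$(1,1) * p1 * cnj p1"
      using half_sq[of "p0 + p1"] half_sq[of "p0 - p1"] by (simp only:)
  qed
  show "mtrace Pp = 1" by (simp add: Pp_def mtrace_def sum2)
qed

lemma Pm_state: "Pm \<in> states 2"
  unfolding states_def
proof (intro CollectI conjI)
  show "psd 2 Pm"
  proof (rule psd2I)
    show "Pm \<in> carrier_mat 2 2" by (simp add: Pm_def)
    fix p0 p1 :: complex
    have "Pm$$(0,0) * p0 * cnj p0 + Pm$$(0,1) * p1 * cnj p0 + Pm$$(1,0) * p0 * cnj p1 + Pm$$(1,1) * p1 * cnj p1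
      = (1/2) * ((p0 - p1) * cnj (p0 - p1))" (is "_ = ?r") by (simp add: Pm_def algebra_simps)
    then show "0 \<le> Pm$$(0,0) * p0 * cnj p0 + Pm$$(0,1) * p1 * cnj p0 + Pm$$(1,0) * p0 * cnj p1 + Pm$$(1,1) * p1 * cnj p1"
      using half_sq[of "p0 + p1"] half_sq[of "p0 - p1"] by (simp only:)
  qed
  show "mtrace Pm = 1" by (simp add: Pm_def mtrace_def sum2)
qed

lemma P_sum: "P0 + P1 = Pp + Pm"
proof (rule eq_matI)
  fix i j assume "i < dim_row (Pp + Pm)" "j < dim_col (Pp + Pm)"
  then have "i < 2" "j < 2" by (auto simp: Pp_def Pm_def)
  then have "(i = 0 \<or> i = 1) \<and> (j = 0 \<or> j = 1)" by auto
  then show "(P0 + P1) $$ (i,j) = (Pp + Pm) $$ (i,j)"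
    by (auto simp: P0_def P1_def Pp_def Pm_def)
qed (auto simp: P0_def P1_def Pp_def Pm_def)

lemma not_bc: "\<not> broadcastable 2 (states 2) {[sic_E 1, sic_E 2, sic_E 3, sic_E 4]}"
proof
  assume "broadcastable 2 (states 2) {[sic_E 1, sic_E 2, sic_E 3, sic_E 4]}"
  then obtain \<Lambda> where cp: "cptp 2 (2*2) \<Lambda>" and H: "\<forall>As \<in> {[sic_E 1, sic_E 2, sic_E 3, sic_E 4]}. \<forall>\<rho> \<in> states 2. \<forall>k < length As.
        mtrace (As ! k * ptrace2 2 (\<Lambda> \<rho>)) = mtrace (As ! k * \<rho>) \<and>
        mtrace (As ! k * ptrace1 2 (\<Lambda> \<rho>)) = mtrace (As ! k * \<rho>)"
    unfolding broadcastable_def by blast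
  have lin: "lin_map 2 4 \<Lambda>" and CP: "completely_positive 2 4 \<Lambda>" using cp by (auto simp: cptp_def)
  have H1: "mtrace (sic_E j * ptrace2 2 (\<Lambda> \<rho>)) = mtrace (sic_E j * \<rho>) \<and> mtrace (sic_E j * ptrace1 2 (\<Lambda> \<rho>)) = mtrace (sic_E j * \<rho>)"
    if r: "\<rho> \<in> states 2" and j: "j \<in> {1..4}" for \<rho> j
  proof -
    have "j - 1 < length [sic_E 1, sic_E 2, sic_E 3, sic_E 4]" using j by auto
    moreover have "[sic_E 1, sic_E 2, sic_E 3, sic_E 4] ! (j - 1) = sic_E j"
    proof -
      have "j = 1 \<or> j = 2 \<or> j = 3 \<or> j = 4" using j by auto
      then show ?thesis by auto
    qed
    ultimately show ?thesis using H r by force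
  qed
  have marg: "ptrace2 2 (\<Lambda> \<rho>) = \<rho> \<and> ptrace1 2 (\<Lambda> \<rho>) = \<rho>" if r: "\<rho> \<in> states 2" for \<rho>
  proof -
    have R: "\<rho> \<in> carrier_mat 2 2" using r by (intro psd_carrier states_psd)
    have c2: "ptrace2 2 (\<Lambda> \<rho>) \<in> carrier_mat 2 2" and c1: "ptrace1 2 (\<Lambda> \<rho>) \<in> carrier_mat 2 2"
      by (simp_all add: ptrace2_def ptrace1_def)
    show ?thesis using ic_lemma[OF c2 R] ic_lemma[OF c1 R] H1[OF r] by blast
  qed
  have pos: "psd 4 (\<Lambda> \<rho>)" if r: "\<rho> \<in> states 2" for \<rho>
  proof -
    have R: "\<rho> \<in> carrier_mat 2 2" using r by (intro psd_carrier states_psd)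
    have L: "\<Lambda> \<rho> \<in> carrier_mat 4 4" using lin R by (simp add: lin_map_def)
    have "psd (1*2) \<rho>" using r states_psd by simp
    moreover have "\<forall>m\<ge>1. \<forall>X. psd (m * 2) X \<longrightarrow> psd (m * 4) (id_tensor m 2 4 \<Lambda> X)"
      using CP unfolding completely_positive_def .
    ultimately have "psd (1*4) (id_tensor 1 2 4 \<Lambda> \<rho>)" by blast
    moreover have "id_tensor 1 2 4 \<Lambda> \<rho> = \<Lambda> \<rho>"
    proof -
      have inner: "mat 2 2 (($$) \<rho>) = \<rho>"
        using R by (intro eq_matI) auto
      show ?thesis unfolding id_tensor_def
        using L by (intro eq_matI) (auto simp: inner)
    qed
    ultimately show ?thesis by simp
  qed
  have add: "\<Lambda> (A + B) = \<Lambda> A + \<Lambda> B" if "A \<in> carrier_mat 2 2" "B \<in> carrier_mat 2 2" for A B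
    using lin that by (simp add: lin_map_def)
  have c: "P0 \<in> carrier_mat 2 2" "P1 \<in> carrier_mat 2 2" "Pp \<in> carrier_mat 2 2" "Pm \<in> carrier_mat 2 2"
    by (simp_all add: P0_def P1_def Pp_def Pm_def)
  have eq: "\<Lambda> P0 + \<Lambda> P1 = \<Lambda> Pp + \<Lambda> Pm"
    using add[OF c(1,2)] add[OF c(3,4)] P_sum by simp
  show False
    using no_clone[OF pos[OF P0_state] pos[OF P1_state] pos[OF Pp_state] pos[OF Pm_state]
      conjunct1[OF marg[OF P0_state]] conjunct2[OF marg[OF P0_state]]
      conjunct1[OF marg[OF P1_state]] conjunct2[OF marg[OF P1_state]]
      conjunct1[OF marg[OF Pp_state]] conjunct2[OF marg[OF Pm_state]] eq] .
qed

theorem mainTheorem8: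
  shows "\<not> broadcastable 2 (states 2) {[sic_E 1, sic_E 2, sic_E 3, sic_E 4]}
    \<and> (\<forall>n::nat.
         lin_map 2 (2 ^ n) (Xi n) \<and> trace_preserving 2 (Xi n)
       \<and> (\<forall>is. length is = n \<longrightarrow> set is \<subseteq> {1..4} \<longrightarrow>
            (\<forall>\<rho> \<in> states 2. 0 \<le> mtrace (kron_list (map sic_E is) * Xi n \<rho>)))
       \<and> (\<forall>j \<in> {1..4}. \<forall>k \<in> {1..n}. \<forall>\<rho> \<in> states 2.
            mtrace (sic_E j * ptrace_keep n k (Xi n \<rho>)) = mtrace (sic_E j * \<rho>)))"
  using not_bc Xi_lin Xi_tp Xi_pos Xi_marg by auto


end
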